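(* Let $C_2\subseteq C_1\subseteq\mathbb F_2^n$ be binary linear codes. Then $(C_1,C_2)$ is a binary CSS-$T$ pair if and only if $C_1\star C_1\subseteq C_2^\perp$.
   Context: $\langle x,y\rangle=\sum_i x_iy_i$ is the standard inner product on $\mathbb F_2^n$ and $C^\perp$ the dual code. For $a,b\in\mathbb F_2^n$, $a\star b=(a_1b_1,\dots,a_nb_n)$, and for codes $A,B$, $A\star B=\mathrm{span}\{a\star b:a\in A,b\in B\}$. The Hamming weight $\omega^{\mathrm H}(x)$ is the number of nonzero coordinates of $x$. A pair of binary linear codes $(C_1,C_2)$ with $C_2\subseteq C_1\subseteq\mathbb F_2^n$ is a binary CSS-$T$ pair if (i) $C_2$ is even, i.e. every $x\in C_2$ has even Hamming weight, and (ii) for every $x\in C_2$ there exists a linear code $C_x\subseteq C_1^\perp$ of dimension $\omega^{\mathrm H}(x)/2$ which is supported on $x$ (every $y\in C_x$ has $y_i=0$ whenever $x_i=0$) and is self-dual when regarded as a code of length $\omega^{\mathrm H}(x)$ on the support of $x$. *)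

theory Defs
  imports "HOL-Analysis.Analysis" "HOL-Library.Z2"
begin

definition bin_inner :: "bit ^ 'n \<Rightarrow> bit ^ 'n \<Rightarrow> bit" where
  "bin_inner x y = (\<Sum>i\<in>UNIV. x $ i * y $ i)"

definition dual_code :: "(bit ^ 'n) set \<Rightarrow> (bit ^ 'n) set" where
  "dual_code C = {y. \<forall>x\<in>C. bin_inner x y = 0}"

definition star_vec :: "bit ^ 'n \<Rightarrow> bit ^ 'n \<Rightarrow> bit ^ 'n" where
  "star_vec a b = (\<chi> i. a $ i * b $ i)"

definition star_code :: "(bit ^ 'n) set \<Rightarrow> (bit ^ 'n) set \<Rightarrow> (bit ^ 'n) set" where
  "star_code A B = vec.span {star_vec a b | a b. a \<in> A \<and> b \<in> B}"

definition hweight :: "bit ^ 'n \<Rightarrow> nat" where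
  "hweight x = card {i. x $ i \<noteq> 0}"

definition linear_code :: "(bit ^ 'n) set \<Rightarrow> bool" where
  "linear_code C \<longleftrightarrow> vec.subspace C"

definition even_code :: "(bit ^ 'n) set \<Rightarrow> bool" where
  "even_code C \<longleftrightarrow> (\<forall>x\<in>C. even (hweight x))"

definition supported_on :: "(bit ^ 'n) set \<Rightarrow> bit ^ 'n \<Rightarrow> bool" where
  "supported_on D x \<longleftrightarrow> (\<forall>y\<in>D. \<forall>i. x $ i = 0 \<longrightarrow> y $ i = 0)"

text \<open>Self-duality of D as a code of length wt(x) on the support of x:
  D equals the set of vectors supported on x that are orthogonal to all of D
  (the dual of D inside F_2^{supp x}).\<close>
definition self_dual_on_support :: "(bit ^ 'n) set \<Rightarrow> bit ^ 'n \<Rightarrow> bool" where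
  "self_dual_on_support D x \<longleftrightarrow>
     D = {y. (\<forall>i. x $ i = 0 \<longrightarrow> y $ i = 0) \<and> (\<forall>z\<in>D. bin_inner z y = 0)}"

definition CSS_T_pair :: "(bit ^ 'n) set \<Rightarrow> (bit ^ 'n) set \<Rightarrow> bool" where
  "CSS_T_pair C1 C2 \<longleftrightarrow>
     even_code C2 \<and>
     (\<forall>x\<in>C2. \<exists>Cx. linear_code Cx \<and> Cx \<subseteq> dual_code C1 \<and>
        vec.dim Cx = hweight x div 2 \<and> supported_on Cx x \<and> self_dual_on_support Cx x)"

end

theory Submission
  imports Defs
begin

lemma bi_sym: "bin_inner a b = bin_inner b a"
  by (simp del: mult_bit_eq_and add_bit_eq_xor add: bin_inner_def mult.commute)
lemma bi_add_left: "bin_inner (a + b) y = bin_inner a y + bin_inner b y"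
  unfolding bin_inner_def sum.distrib[symmetric] by (rule sum.cong, simp, simp only: vector_add_component, rule distrib_right)
lemma bi_add_right: "bin_inner y (a + b) = bin_inner y a + bin_inner y b"
  unfolding bin_inner_def sum.distrib[symmetric] by (rule sum.cong, simp, simp only: vector_add_component, rule distrib_left)
lemma bi_diff_left: "bin_inner (a - b) y = bin_inner a y - bin_inner b y"
  by (metis bi_add_left diff_add_cancel add_diff_cancel)
lemma bi_diff_right: "bin_inner y (a - b) = bin_inner y a - bin_inner y b"
  by (metis bi_add_right diff_add_cancel add_diff_cancel)
lemma bi_scale_left: "bin_inner (c *s a) y = c * bin_inner a y"
  by (simp del: mult_bit_eq_and add_bit_eq_xor add: bin_inner_def sum_distrib_left mult.assoc)
lemma bi_scale_right: "bin_inner y (c *s a) = c * bin_inner y a"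
  by (simp del: mult_bit_eq_and add_bit_eq_xor add: bin_inner_def sum_distrib_left mult.left_commute)
lemma bi_zero_left[simp]: "bin_inner 0 y = 0"
  by (simp del: mult_bit_eq_and add_bit_eq_xor add: bin_inner_def)
lemma bi_zero_right[simp]: "bin_inner y 0 = 0"
  by (simp del: mult_bit_eq_and add_bit_eq_xor add: bin_inner_def)
lemma bi_axis: "bin_inner a (axis i 1) = a $ i"
proof -
  have "bin_inner a (axis i 1) = (\<Sum>j\<in>UNIV. if j = i then a $ j else 0)"
    unfolding bin_inner_def axis_def by (rule sum.cong) auto
  then show ?thesis by simp
qed

lemma bit_idem: "(b::bit) * b = b"
  by (metis bit_not_zero_iff mult_1 mult_zero_left)

definition supp_sp :: "bit ^ 'n \<Rightarrow> (bit ^ 'n) set" where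
  "supp_sp x = {y. \<forall>i. x $ i = 0 \<longrightarrow> y $ i = 0}"

definition perpS :: "bit ^ 'n \<Rightarrow> (bit ^ 'n) set \<Rightarrow> (bit ^ 'n) set" where
  "perpS x B = {y. (\<forall>i. x $ i = 0 \<longrightarrow> y $ i = 0) \<and> (\<forall>z\<in>B. bin_inner z y = 0)}"

lemma subspace_supp: "vec.subspace (supp_sp x)"
  by (auto simp: vec.subspace_def supp_sp_def)

lemma subspace_perpS: "vec.subspace (perpS x B)"
  by (auto simp: vec.subspace_def perpS_def bi_add_right bi_scale_right)

lemma perpS_supp: "perpS x B \<subseteq> supp_sp x"
  by (auto simp: perpS_def supp_sp_def)

lemma perpS_insert: "perpS x (insert b B) = {y \<in> perpS x B. bin_inner b y = 0}"
  by (auto simp: perpS_def)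

lemma bi_span_left:
  assumes "\<forall>a\<in>B. bin_inner a y = 0" "a \<in> vec.span B"
  shows "bin_inner a y = 0"
proof -
  have "vec.subspace {a. bin_inner a y = 0}"
    by (auto simp: vec.subspace_def bi_add_left bi_scale_left)
  then show ?thesis using assms vec.span_induct[of a B "\<lambda>a. bin_inner a y = 0"] by auto
qed

lemma selforth_span:
  assumes "\<forall>a\<in>S. \<forall>b\<in>S. bin_inner a b = 0"
  shows "\<forall>a\<in>vec.span S. \<forall>b\<in>vec.span S. bin_inner a b = 0"
proof (intro ballI)
  fix a b assume a: "a \<in> vec.span S" and b: "b \<in> vec.span S"
  have "\<forall>c\<in>S. bin_inner c b = 0"
  proof
    fix c assume "c \<in> S"
    then have "bin_inner b c = 0" using bi_span_left[of S c b] assms b by auto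
    then show "bin_inner c b = 0" by (simp add: bi_sym)
  qed
  then show "bin_inner a b = 0" using bi_span_left a by blast
qed

lemma perpS_span: "perpS x (vec.span B) = perpS x B"
  using bi_span_left by (auto simp: perpS_def intro: vec.span_base)

lemma hyper_dim:
  assumes P: "vec.subspace P"
  shows "vec.dim P \<le> vec.dim {y\<in>P. bin_inner b y = 0} + 1"
proof (cases "\<forall>y\<in>P. bin_inner b y = 0")
  case True
  then have "{y\<in>P. bin_inner b y = 0} = P" by auto
  then show ?thesis by simp
next
  case False
  then obtain y0 where y0: "y0 \<in> P" "bin_inner b y0 = 1" using bit_not_zero_iff by blast
  let ?H = "{y\<in>P. bin_inner b y = 0}"
  have "P \<subseteq> vec.span (insert y0 ?H)"
  proof
    fix y assume y: "y \<in> P"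
    let ?y' = "y - bin_inner b y *s y0"
    have "?y' \<in> P" using P y y0 by (simp add: vec.subspace_diff vec.subspace_scale)
    moreover have "bin_inner b ?y' = 0" using y0 by (simp add: bi_diff_right bi_scale_right)
    ultimately have "?y' \<in> ?H" by simp
    then have "?y' + bin_inner b y *s y0 \<in> vec.span (insert y0 ?H)"
      by (meson insertCI subsetD subset_insertI vec.span_add vec.span_base vec.span_scale)
    then show "y \<in> vec.span (insert y0 ?H)" by simp
  qed
  then have "vec.dim P \<le> vec.dim (insert y0 ?H)" by (rule vec.dim_mono)
  also have "\<dots> \<le> vec.dim ?H + 1" by (simp add: vec.dim_insert)
  finally show ?thesis .
qed


lemma dim_supp: "vec.dim (supp_sp x) = hweight x"
proof -
  let ?S = "{i. x $ i \<noteq> 0}"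
  let ?B = "(\<lambda>i. axis i (1::bit)) ` ?S"
  have ind: "vec.independent ?B"
    by (rule vec.independent_mono[OF independent_cart_basis]) (auto simp: cart_basis_def)
  have sub: "?B \<subseteq> supp_sp x" by (auto simp: supp_sp_def axis_def)
  have sp: "supp_sp x \<subseteq> vec.span ?B"
  proof
    fix y assume y: "y \<in> supp_sp x"
    have eq: "y = (\<Sum>i\<in>?S. y $ i *s axis i 1)"
    proof (subst vec_eq_iff, intro allI)
      fix j
      have "(\<Sum>i\<in>?S. y $ i *s axis i (1::bit)) $ j = (\<Sum>i\<in>?S. if i = j then y $ i else 0)"
        by (subst sum_component, rule sum.cong) (auto simp: axis_def)
      also have "\<dots> = y $ j" using y by (auto simp: supp_sp_def)
      finally show "y $ j = (\<Sum>i\<in>?S. y $ i *s axis i 1) $ j" by simp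
    qed
    have "(\<Sum>i\<in>?S. y $ i *s axis i 1) \<in> vec.span ?B"
      by (intro vec.span_sum vec.span_scale vec.span_base) auto
    with eq show "y \<in> vec.span ?B" by simp
  qed
  have "card ?B = card ?S"
    by (rule card_image) (auto simp: inj_on_def axis_eq_axis)
  then show ?thesis using vec.basis_card_eq_dim[OF sub sp ind] by (simp add: hweight_def)
qed

lemma DD:
  assumes "finite B"
  shows "B \<subseteq> supp_sp x \<Longrightarrow> a \<in> supp_sp x \<Longrightarrow> (\<forall>y\<in>perpS x B. bin_inner a y = 0) \<Longrightarrow> a \<in> vec.span B"
  using assms
proof (induction B arbitrary: a rule: finite_induct)
  case empty
  have "a = 0"
  proof (subst vec_eq_iff, intro allI)
    fix i
    show "a $ i = 0 $ i"
    proof (cases "x $ i = 0")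
      case True then show ?thesis using empty(2) by (simp add: supp_sp_def)
    next
      case False
      then have "axis i 1 \<in> perpS x {}" by (auto simp: perpS_def axis_def)
      then have "bin_inner a (axis i 1) = 0" using empty(3) by blast
      then show ?thesis by (simp add: bi_axis)
    qed
  qed
  then show ?case by (simp add: vec.span_zero)
next
  case (insert b B)
  have bS: "b \<in> supp_sp x" and BS: "B \<subseteq> supp_sp x" using insert(4) by auto
  show ?case
  proof (cases "\<forall>y\<in>perpS x B. bin_inner b y = 0")
    case True
    then have "perpS x (insert b B) = perpS x B" by (auto simp: perpS_insert)
    then have "a \<in> vec.span B" using insert.IH[OF BS insert(5)] insert(6) by simp
    then show ?thesis by (meson subset_insertI vec.span_mono subsetD)
  next
    case False
    then obtain y0 where y0: "y0 \<in> perpS x B" "bin_inner b y0 = 1" using bit_not_zero_iff by blast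
    let ?a' = "a - bin_inner a y0 *s b"
    have a'S: "?a' \<in> supp_sp x"
      using bS insert(5) by (meson vec.subspace_diff vec.subspace_scale subspace_supp)
    have "\<forall>y\<in>perpS x B. bin_inner ?a' y = 0"
    proof
      fix y assume y: "y \<in> perpS x B"
      let ?y' = "y - bin_inner b y *s y0"
      have "?y' \<in> perpS x B" using y y0 by (meson vec.subspace_diff vec.subspace_scale subspace_perpS)
      moreover have "bin_inner b ?y' = 0" using y0 by (simp add: bi_diff_right bi_scale_right)
      ultimately have "?y' \<in> perpS x (insert b B)" by (simp add: perpS_insert)
      then have "bin_inner a ?y' = 0" using insert(6) by blast
      then have "bin_inner a y = bin_inner b y * bin_inner a y0"
        by (metis bi_diff_right bi_scale_right right_minus_eq)
      moreover have "bin_inner ?a' y = bin_inner a y - bin_inner a y0 * bin_inner b y"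
        by (simp only: bi_diff_left bi_scale_left)
      ultimately show "bin_inner ?a' y = 0"
        by (metis mult.commute diff_self)
    qed
    then have "?a' \<in> vec.span B" using insert.IH[OF BS a'S] by simp
    then have "?a' + bin_inner a y0 *s b \<in> vec.span (insert b B)"
      by (meson insertI1 subset_insertI subsetD vec.span_add vec.span_base vec.span_mono vec.span_scale)
    then show ?thesis by simp
  qed
qed


lemma dimperp:
  assumes "finite B"
  shows "vec.independent B \<Longrightarrow> B \<subseteq> supp_sp x \<Longrightarrow> vec.dim (perpS x B) + card B = hweight x"
  using assms
proof (induction B rule: finite_induct)
  case empty
  have "perpS x {} = supp_sp x" by (auto simp: perpS_def supp_sp_def)
  then show ?case by (simp add: dim_supp)
next
  case (insert b B)
  have indB: "vec.independent B" and bn: "b \<notin> vec.span B"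
    using insert(1,2,4) by (auto simp: vec.independent_insert)
  have bS: "b \<in> supp_sp x" and BS: "B \<subseteq> supp_sp x" using insert(5) by auto
  have IH: "vec.dim (perpS x B) + card B = hweight x" using insert.IH[OF indB BS] .
  let ?P = "perpS x B" and ?P' = "perpS x (insert b B)"
  have le: "vec.dim ?P \<le> vec.dim ?P' + 1"
    using hyper_dim[OF subspace_perpS, of x B b] by (simp add: perpS_insert)
  obtain y0 where y0: "y0 \<in> ?P" "bin_inner b y0 \<noteq> 0"
    using DD[OF insert(1) BS bS] bn by blast
  have "y0 \<notin> ?P'" using y0 by (simp add: perpS_insert)
  moreover have "?P' \<subseteq> ?P" by (auto simp: perpS_insert)
  ultimately have "?P' \<subset> ?P" using y0(1) by blast
  moreover have e: "vec.span ?P' = ?P'" "vec.span ?P = ?P" by (simp_all add: subspace_perpS)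
  ultimately have "vec.span ?P' \<subset> vec.span ?P" unfolding e by simp
  then have "vec.dim ?P' < vec.dim ?P" by (rule vec.dim_psubset)
  with le IH show ?case using insert(1,2) by simp
qed


lemma perpS_anti: "A \<subseteq> A' \<Longrightarrow> perpS x A' \<subseteq> perpS x A"
  by (auto simp: perpS_def)

lemma perpS_basis: "B \<subseteq> A \<Longrightarrow> A \<subseteq> vec.span B \<Longrightarrow> perpS x A = perpS x B"
  using perpS_anti[of B A x] perpS_anti[of A "vec.span B" x] perpS_span[of x B] by auto

lemma selfinner: "y \<in> supp_sp x \<Longrightarrow> bin_inner y y = bin_inner x y"
  unfolding bin_inner_def supp_sp_def
proof (rule sum.cong)
  fix i assume "y \<in> {y. \<forall>i. x $ i = 0 \<longrightarrow> y $ i = 0}"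
  then show "y $ i * y $ i = x $ i * y $ i"
    by (cases "x $ i = 0") (auto simp: bit_idem bit_not_zero_iff)
qed simp

lemma of_nat_bit: "(of_nat n :: bit) = 0 \<longleftrightarrow> even n"
  by (induct n) auto

lemma extend:
  fixes x :: "bit ^ 'n"
  assumes ev: "even (hweight x)"
  shows "vec.subspace A \<Longrightarrow> A \<subseteq> supp_sp x \<Longrightarrow> (\<forall>a\<in>A. \<forall>b\<in>A. bin_inner a b = 0)
    \<Longrightarrow> 2 * vec.dim A \<le> hweight x
    \<Longrightarrow> \<exists>D. vec.subspace D \<and> A \<subseteq> D \<and> D \<subseteq> supp_sp x \<and> (\<forall>a\<in>D. \<forall>b\<in>D. bin_inner a b = 0)
          \<and> 2 * vec.dim D = hweight x"
proof (induction "hweight x - 2 * vec.dim A" arbitrary: A rule: less_induct)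
  case less
  show ?case
  proof (cases "2 * vec.dim A = hweight x")
    case True then show ?thesis using less.prems by blast
  next
    case False
    have k2: "2 * vec.dim A + 2 \<le> hweight x" using False less.prems(4) ev by presburger
    obtain B where B: "B \<subseteq> A" "vec.independent B" "A \<subseteq> vec.span B" "card B = vec.dim A"
      by (rule vec.basis_exists)
    have fB: "finite B" using B(2) by (rule vec.finiteI_independent)
    have BS: "B \<subseteq> supp_sp x" using B(1) less.prems(2) by auto
    have dP: "vec.dim (perpS x B) + vec.dim A = hweight x" using dimperp[OF fB B(2) BS] B(4) by simp
    let ?E = "perpS x (insert x B)"
    have dE: "vec.dim (perpS x B) \<le> vec.dim ?E + 1"
      using hyper_dim[OF subspace_perpS, of x B x] by (simp add: perpS_insert)
    have "\<not> ?E \<subseteq> A"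
    proof
      assume "?E \<subseteq> A"
      then have "vec.dim ?E \<le> vec.dim A" by (rule vec.dim_subset)
      then show False using dE dP k2 by linarith
    qed
    then obtain v where v: "v \<in> ?E" "v \<notin> A" by blast
    have vS: "v \<in> supp_sp x" using v(1) perpS_supp by blast
    have vx: "bin_inner x v = 0" and vB: "\<forall>b\<in>B. bin_inner b v = 0" using v(1) by (auto simp: perpS_def)
    let ?A' = "vec.span (insert v A)"
    have sA': "vec.subspace ?A'" by (rule vec.subspace_span)
    have AA': "A \<subseteq> ?A'" by (meson subset_insertI subset_trans vec.span_superset)
    have A'S: "?A' \<subseteq> supp_sp x"
      using vS less.prems(2) by (intro vec.span_minimal subspace_supp) auto
    have "\<forall>a\<in>insert v A. \<forall>b\<in>insert v A. bin_inner a b = 0"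
    proof (intro ballI)
      fix a b assume a: "a \<in> insert v A" and b: "b \<in> insert v A"
      have va: "bin_inner c v = 0" if "c \<in> A" for c
        using bi_span_left[OF vB] that B(3) by blast
      have vv: "bin_inner v v = 0" using selfinner[OF vS] vx by simp
      show "bin_inner a b = 0"
        using a b va vv less.prems(3) bi_sym by (metis insertE)
    qed
    then have so: "\<forall>a\<in>?A'. \<forall>b\<in>?A'. bin_inner a b = 0" by (rule selforth_span)
    have "v \<notin> vec.span A" using v(2) less.prems(1) by (metis vec.span_eq_iff)
    then have dA': "vec.dim ?A' = vec.dim A + 1" by (simp add: vec.dim_insert)
    then have "hweight x - 2 * vec.dim ?A' < hweight x - 2 * vec.dim A" using k2 by simp
    moreover have "2 * vec.dim ?A' \<le> hweight x" using dA' k2 by simp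
    ultimately obtain D where "vec.subspace D" "?A' \<subseteq> D" "D \<subseteq> supp_sp x"
      "\<forall>a\<in>D. \<forall>b\<in>D. bin_inner a b = 0" "2 * vec.dim D = hweight x"
      using less.hyps[OF _ sA' A'S so] by blast
    then show ?thesis using AA' by blast
  qed
qed


lemma subspace_dual: "vec.subspace (dual_code C)"
  by (auto simp: vec.subspace_def dual_code_def bi_add_right bi_scale_right)

lemma star_supp: "star_vec x c \<in> supp_sp x"
  by (simp add: star_vec_def supp_sp_def)

lemma inner_restrict: "y \<in> supp_sp x \<Longrightarrow> bin_inner c y = bin_inner (star_vec x c) y"
  unfolding bin_inner_def supp_sp_def star_vec_def
proof (rule sum.cong)
  fix i assume "y \<in> {y. \<forall>i. x $ i = 0 \<longrightarrow> y $ i = 0}"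
  then show "c $ i * y $ i = (\<chi> i. x $ i * c $ i) $ i * y $ i"
    by (cases "x $ i = 0") (auto simp: bit_not_zero_iff)
qed simp

lemma inner_star: "bin_inner x (star_vec a b) = bin_inner (star_vec x a) (star_vec x b)"
  unfolding bin_inner_def star_vec_def
  by (rule sum.cong) (simp_all add: bit_idem mult_ac)

lemma weight_inner: "bin_inner x (star_vec x x) = of_nat (hweight x)"
proof -
  have "bin_inner x (star_vec x x) = (\<Sum>i\<in>UNIV. of_bool (x $ i \<noteq> 0))"
    unfolding bin_inner_def star_vec_def by (rule sum.cong) (auto simp: bit_not_zero_iff)
  then show ?thesis by (simp add: hweight_def)
qed

lemma star_add: "star_vec x (a + b) = star_vec x a + star_vec x b"
  unfolding star_vec_def vec_eq_iff by (simp only: vec_lambda_beta vector_add_component distrib_left simp_thms)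
lemma star_scale: "star_vec x (c *s a) = c *s star_vec x a"
  unfolding star_vec_def vec_eq_iff by (simp only: vec_lambda_beta vector_smult_component mult.left_commute simp_thms)
lemma star_zero: "star_vec x 0 = 0"
  by (simp add: star_vec_def vec_eq_iff)

lemma subspace_img:
  assumes C: "vec.subspace C"
  shows "vec.subspace (star_vec x ` C)"
  unfolding vec.subspace_def
proof (intro conjI ballI allI)
  show "0 \<in> star_vec x ` C"
    using vec.subspace_0[OF C] star_zero[of x] by (metis image_eqI)
next
  fix u v assume "u \<in> star_vec x ` C" "v \<in> star_vec x ` C"
  then obtain a b where "a \<in> C" "b \<in> C" "u = star_vec x a" "v = star_vec x b" by blast
  then show "u + v \<in> star_vec x ` C"
    using vec.subspace_add[OF C] star_add[of x a b] by (metis image_eqI)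
next
  fix c u assume "u \<in> star_vec x ` C"
  then obtain a where "a \<in> C" "u = star_vec x a" by blast
  then show "c *s u \<in> star_vec x ` C"
    using vec.subspace_scale[OF C] star_scale[of x c a] by (metis image_eqI)
qed

theorem mainTheorem2:
  fixes C1 C2 :: "(bit ^ 'n) set"
  assumes "linear_code C1" and "linear_code C2" and "C2 \<subseteq> C1"
  shows "CSS_T_pair C1 C2 \<longleftrightarrow> star_code C1 C1 \<subseteq> dual_code C2"
proof
  assume css: "CSS_T_pair C1 C2"
  have "star_vec a b \<in> dual_code C2" if a: "a \<in> C1" and b: "b \<in> C1" for a b
  proof -
    have "bin_inner x (star_vec a b) = 0" if x: "x \<in> C2" for x
    proof -
      obtain Cx where Cx: "Cx \<subseteq> dual_code C1" "supported_on Cx x" "self_dual_on_support Cx x"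
        using css x unfolding CSS_T_pair_def by blast
      have sd: "Cx = perpS x Cx" using Cx(3) unfolding self_dual_on_support_def perpS_def .
      have inC: "star_vec x c \<in> Cx" if c: "c \<in> C1" for c
      proof -
        have "\<forall>z\<in>Cx. bin_inner z (star_vec x c) = 0"
        proof
          fix z assume z: "z \<in> Cx"
          have zS: "z \<in> supp_sp x" using Cx(2) z by (auto simp: supported_on_def supp_sp_def)
          have "bin_inner c z = 0" using Cx(1) z c by (auto simp: dual_code_def)
          have "bin_inner z (star_vec x c) = bin_inner (star_vec x c) z" by (rule bi_sym)
          also have "\<dots> = bin_inner c z" by (rule inner_restrict[OF zS, symmetric])
          finally show "bin_inner z (star_vec x c) = 0" using \<open>bin_inner c z = 0\<close> by simp
        qed
        then have "star_vec x c \<in> perpS x Cx" using star_supp[of x c]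
          by (simp add: perpS_def supp_sp_def)
        then show ?thesis using sd by blast
      qed
      have "star_vec x b \<in> perpS x Cx" using inC[OF b] sd by blast
      then have "bin_inner (star_vec x a) (star_vec x b) = 0" using inC[OF a] by (simp add: perpS_def)
      then show ?thesis using inner_star[of x a b] by simp
    qed
    then show ?thesis by (simp add: dual_code_def)
  qed
  then show "star_code C1 C1 \<subseteq> dual_code C2"
    unfolding star_code_def by (intro vec.span_minimal subspace_dual) auto
next
  assume H: "star_code C1 C1 \<subseteq> dual_code C2"
  have key: "bin_inner x (star_vec a b) = 0" if "x \<in> C2" "a \<in> C1" "b \<in> C1" for x a b
  proof -
    have "star_vec a b \<in> star_code C1 C1" unfolding star_code_def
      by (rule vec.span_base) (use that in blast)
    then show ?thesis using H that(1) by (auto simp: dual_code_def)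
  qed
  have ev: "even (hweight x)" if x: "x \<in> C2" for x
  proof -
    have "bin_inner x (star_vec x x) = 0" using key[OF x] x assms(3) by blast
    then have "(of_nat (hweight x) :: bit) = 0" by (metis weight_inner)
    then show ?thesis using of_nat_bit by blast
  qed
  show "CSS_T_pair C1 C2"
    unfolding CSS_T_pair_def even_code_def
  proof (intro conjI ballI)
    fix x assume x: "x \<in> C2"
    show "even (hweight x)" using ev[OF x] .
    let ?A = "star_vec x ` C1"
    have sA: "vec.subspace ?A" using assms(1) by (simp add: linear_code_def subspace_img)
    have AS: "?A \<subseteq> supp_sp x" using star_supp by blast
    have soA: "\<forall>a\<in>?A. \<forall>b\<in>?A. bin_inner a b = 0" using key[OF x] by (auto simp: inner_star[symmetric])
    obtain B where B: "B \<subseteq> ?A" "vec.independent B" "?A \<subseteq> vec.span B" "card B = vec.dim ?A"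
      by (rule vec.basis_exists)
    have fB: "finite B" using B(2) by (rule vec.finiteI_independent)
    have "vec.dim (perpS x B) + vec.dim ?A = hweight x"
    proof -
      have "B \<subseteq> supp_sp x" using B(1) AS by blast
      from dimperp[OF fB B(2) this] show ?thesis using B(4) by simp
    qed
    moreover have "?A \<subseteq> perpS x B"
      using soA AS B(1) by (auto simp: perpS_def supp_sp_def)
    then have "vec.dim ?A \<le> vec.dim (perpS x B)" by (rule vec.dim_subset)
    ultimately have "2 * vec.dim ?A \<le> hweight x" by linarith
    then obtain D where D: "vec.subspace D" "?A \<subseteq> D" "D \<subseteq> supp_sp x"
      "\<forall>a\<in>D. \<forall>b\<in>D. bin_inner a b = 0" "2 * vec.dim D = hweight x"
      using extend[OF ev[OF x] sA AS soA] by blast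
    obtain BD where BD: "BD \<subseteq> D" "vec.independent BD" "D \<subseteq> vec.span BD" "card BD = vec.dim D"
      by (rule vec.basis_exists)
    have fBD: "finite BD" using BD(2) by (rule vec.finiteI_independent)
    have dPD: "vec.dim (perpS x D) = vec.dim D"
    proof -
      have "BD \<subseteq> supp_sp x" using BD(1) D(3) by blast
      from dimperp[OF fBD BD(2) this] have "vec.dim (perpS x BD) + vec.dim D = hweight x"
        using BD(4) by simp
      then show ?thesis using D(5) perpS_basis[OF BD(1,3), of x] by simp
    qed
    have DP: "D \<subseteq> perpS x D" using D(3,4) by (auto simp: perpS_def supp_sp_def)
    have DeqP: "D = perpS x D"
      by (rule vec.subspace_dim_equal[OF D(1) subspace_perpS DP]) (simp add: dPD)
    show "\<exists>Cx. linear_code Cx \<and> Cx \<subseteq> dual_code C1 \<and> vec.dim Cx = hweight x div 2 \<and>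
        supported_on Cx x \<and> self_dual_on_support Cx x"
    proof (intro exI conjI)
      show "linear_code D" using D(1) by (simp add: linear_code_def)
      show "D \<subseteq> dual_code C1"
      proof
        fix d assume d: "d \<in> D"
        have "bin_inner c d = 0" if c: "c \<in> C1" for c
        proof -
          have "star_vec x c \<in> D" using D(2) c by blast
          then have "bin_inner (star_vec x c) d = 0" using D(4) d by blast
          then show ?thesis using inner_restrict[of d x c] D(3) d by auto
        qed
        then show "d \<in> dual_code C1" by (simp add: dual_code_def)
      qed
      show "vec.dim D = hweight x div 2" using D(5) by simp
      show "supported_on D x" using D(3) by (auto simp: supported_on_def supp_sp_def)
      show "self_dual_on_support D x" using DeqP unfolding self_dual_on_support_def perpS_def .
    qed
  qed
qed

end
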